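(* Let $G=(V,E)$ be a simple undirected graph with $V=\{0,1,\dots,n-1\}$, and let $P\ge 1$ be an integer (the number of processors). Run the space-efficient parallel triangle-counting algorithm (described in the context) on $G$ with $P$ processors. Then the value $T=\sum_{i=0}^{P-1}T_i$ returned by the algorithm equals the exact number of triangles in $G$.
   Context: A triangle in $G$ is a set of three nodes $\{u,v,w\}$ such that $(u,v),(v,w),(w,u)\in E$. For $v\in V$ let $d_v$ be its degree. Define the total order $\prec$ on $V$ by $u\prec v$ iff $d_u<d_v$, or $d_u=d_v$ and $u<v$. For each $v\in V$ let $N_v=\{u: (u,v)\in E,\ v\prec u\}$ (the neighbors of $v$ that are higher in the order $\prec$), stored as a list sorted in ascending order. The algorithm: the node set $V$ is partitioned into $P$ pairwise disjoint sets $V_0,\dots,V_{P-1}$, each consisting of consecutive node labels, with $\bigcup_k V_k=V$. Processor $i$ stores $N_v$ for all $v\in V_i$ and maintains a counter $T_i$, initially $0$. For each $v\in V_i$ and each $u\in N_v$: if $u\in V_i$, processor $i$ adds $|N_v\cap N_u|$ to $T_i$; if $u\in V_j$ with $j\neq i$, processor $i$ sends the list $N_v$ to processor $j$, unless it has already sent $N_v$ to processor $j$ (so for each $v$, $N_v$ is sent at most once to each other processor). Whenever a processor $j$ receives a list $X$ (i.e. $X=N_v$ for some $v$ in another part), it adds $\sum_{u\in X,\ u\in V_j}|N_u\cap X|$ to $T_j$. Every processor processes all messages sent to it (processors broadcast completion notices and each waits until all others have completed and all messages are processed). Finally the algorithm returns $T=\sum_i T_i$. *)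

theory Defs
  imports Main
begin

definition simple_graph :: "nat \<Rightarrow> (nat \<times> nat) set \<Rightarrow> bool" where
  "simple_graph n E \<longleftrightarrow> E \<subseteq> {0..<n} \<times> {0..<n} \<and> sym E \<and> (\<forall>v. (v, v) \<notin> E)"

definition triangles :: "(nat \<times> nat) set \<Rightarrow> nat set set" where
  "triangles E = {t. \<exists>u v w. t = {u, v, w} \<and> (u, v) \<in> E \<and> (v, w) \<in> E \<and> (w, u) \<in> E}"

definition deg :: "nat \<Rightarrow> (nat \<times> nat) set \<Rightarrow> nat \<Rightarrow> nat" where
  "deg n E v = card {u \<in> {0..<n}. (u, v) \<in> E}"

definition prec :: "nat \<Rightarrow> (nat \<times> nat) set \<Rightarrow> nat \<Rightarrow> nat \<Rightarrow> bool" where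
  "prec n E u v \<longleftrightarrow> deg n E u < deg n E v \<or> (deg n E u = deg n E v \<and> u < v)"

definition Nlist :: "nat \<Rightarrow> (nat \<times> nat) set \<Rightarrow> nat \<Rightarrow> nat list" where
  "Nlist n E v = sorted_list_of_set {u \<in> {0..<n}. (u, v) \<in> E \<and> prec n E v u}"

definition valid_partition :: "nat \<Rightarrow> nat \<Rightarrow> (nat \<Rightarrow> nat set) \<Rightarrow> bool" where
  "valid_partition n P Vp \<longleftrightarrow>
     (\<forall>i<P. \<exists>a b. Vp i = {a..<b}) \<and>
     (\<forall>i<P. \<forall>j<P. i \<noteq> j \<longrightarrow> Vp i \<inter> Vp j = {}) \<and>
     (\<Union>i<P. Vp i) = {0..<n}"

definition local_count :: "nat \<Rightarrow> (nat \<times> nat) set \<Rightarrow> (nat \<Rightarrow> nat set) \<Rightarrow> nat \<Rightarrow> nat" where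
  "local_count n E Vp i =
     (\<Sum>v\<in>Vp i. \<Sum>u\<leftarrow>Nlist n E v.
        if u \<in> Vp i then card (set (Nlist n E v) \<inter> set (Nlist n E u)) else 0)"

definition sent :: "nat \<Rightarrow> (nat \<times> nat) set \<Rightarrow> (nat \<Rightarrow> nat set) \<Rightarrow> nat \<Rightarrow> nat \<Rightarrow> nat set" where
  "sent n E Vp i j = {v \<in> Vp i. \<exists>u \<in> set (Nlist n E v). u \<in> Vp j}"

definition receive_value :: "nat \<Rightarrow> (nat \<times> nat) set \<Rightarrow> (nat \<Rightarrow> nat set) \<Rightarrow> nat \<Rightarrow> nat list \<Rightarrow> nat" where
  "receive_value n E Vp j X =
     (\<Sum>u\<leftarrow>X. if u \<in> Vp j then card (set (Nlist n E u) \<inter> set X) else 0)"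

text \<open>Final value of counter T_j after all local work and all received messages
have been processed.\<close>
definition proc_count :: "nat \<Rightarrow> (nat \<times> nat) set \<Rightarrow> nat \<Rightarrow> (nat \<Rightarrow> nat set) \<Rightarrow> nat \<Rightarrow> nat" where
  "proc_count n E P Vp j =
     local_count n E Vp j +
     (\<Sum>i \<in> {0..<P} - {j}. \<Sum>v \<in> sent n E Vp i j. receive_value n E Vp j (Nlist n E v))"

definition algorithm_result :: "nat \<Rightarrow> (nat \<times> nat) set \<Rightarrow> nat \<Rightarrow> (nat \<Rightarrow> nat set) \<Rightarrow> nat" where
  "algorithm_result n E P Vp = (\<Sum>i<P. proc_count n E P Vp i)"

end

theory Submission
  imports Defs
begin

lemma set_Nlist: "set (Nlist n E v) = {u \<in> {0..<n}. (u, v) \<in> E \<and> prec n E v u}"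
  unfolding Nlist_def by simp

lemma distinct_Nlist: "distinct (Nlist n E v)"
  unfolding Nlist_def by simp

lemma finite_SN: "finite (set (Nlist n E v))" by simp

lemma sum_Nlist: "(\<Sum>u\<leftarrow>Nlist n E v. g u) = (\<Sum>u\<in>set (Nlist n E v). g u)"
  using sum.distinct_set_conv_list[OF distinct_Nlist, of g n E v] by simp

lemma prec_irrefl: "\<not> prec n E v v" unfolding prec_def by simp
lemma prec_trans: "prec n E a b \<Longrightarrow> prec n E b c \<Longrightarrow> prec n E a c" unfolding prec_def by auto
lemma prec_asym: "prec n E a b \<Longrightarrow> \<not> prec n E b a" unfolding prec_def by auto
lemma prec_total: "a \<noteq> b \<Longrightarrow> prec n E a b \<or> prec n E b a" unfolding prec_def by auto

lemma part_sum:
  assumes vp: "valid_partition n P Vp"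
  shows "(\<Sum>i<P. \<Sum>v\<in>Vp i. F v) = (\<Sum>v\<in>{0..<n}. F v)"
proof -
  have fin: "\<forall>i\<in>{..<P}. finite (Vp i)"
  proof
    fix i assume "i \<in> {..<P}"
    then have "Vp i \<subseteq> {0..<n}" using vp unfolding valid_partition_def by blast
    then show "finite (Vp i)" using finite_subset by blast
  qed
  have "sum F (\<Union>i\<in>{..<P}. Vp i) = (\<Sum>i<P. sum F (Vp i))"
    apply (rule sum.UNION_disjoint)
    using fin vp unfolding valid_partition_def by auto
  then show ?thesis using vp unfolding valid_partition_def by simp
qed

lemma ind_sum:
  assumes vp: "valid_partition n P Vp" and u: "u < n"
  shows "(\<Sum>j<P. if u \<in> Vp j then c else 0) = (c::nat)"
proof -
  have "u \<in> (\<Union>i<P. Vp i)" using vp u unfolding valid_partition_def by simp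
  then obtain j where j: "j < P" "u \<in> Vp j" by blast
  have "(\<Sum>j<P. if u \<in> Vp j then c else 0) = (\<Sum>j'\<in>{j}. if u \<in> Vp j' then c else 0)"
    apply (rule sum.mono_neutral_right)
    using j vp unfolding valid_partition_def by (auto simp: disjoint_iff)
  then show ?thesis using j by simp
qed

lemma chain3:
  assumes irr: "\<And>x. \<not> r x x" and tr: "\<And>x y z. r x y \<Longrightarrow> r y z \<Longrightarrow> r x z"
    and h: "r a b" "r b c" "r a' b'" "r b' c'" "{a,b,c} = {a',b',c'}"
  shows "a = a' \<and> b = b' \<and> c = c'"
proof -
  have m: "a \<in> {a',b',c'}" "b \<in> {a',b',c'}" "c \<in> {a',b',c'}"
     "a' \<in> {a,b,c}" "b' \<in> {a,b,c}" "c' \<in> {a,b,c}" using h(5) by blast+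
  have ac: "r a c" "r a' c'" using h tr by blast+
  have n1: "a \<noteq> b" "b \<noteq> c" "a \<noteq> c" "a' \<noteq> b'" "b' \<noteq> c'" "a' \<noteq> c'"
    using h ac irr by metis+
  have min1: "x \<in> {a,b,c} \<Longrightarrow> x \<noteq> a \<Longrightarrow> r a x" for x using h ac by blast
  have min2: "x \<in> {a',b',c'} \<Longrightarrow> x \<noteq> a' \<Longrightarrow> r a' x" for x using h ac by blast
  have max1: "x \<in> {a,b,c} \<Longrightarrow> x \<noteq> c \<Longrightarrow> r x c" for x using h ac by blast
  have max2: "x \<in> {a',b',c'} \<Longrightarrow> x \<noteq> c' \<Longrightarrow> r x c'" for x using h ac by blast
  have A: "a = a'"
  proof (rule ccontr)
    assume "a \<noteq> a'"
    then have "r a a'" "r a' a" using min1[OF m(4)] min2[OF m(1)] by auto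
    then show False using tr irr by blast
  qed
  have C: "c = c'"
  proof (rule ccontr)
    assume "c \<noteq> c'"
    then have "r c c'" "r c' c" using max1[OF m(6)] max2[OF m(3)] by auto
    then show False using tr irr by blast
  qed
  have "b = b'" using m(2) A C n1 by blast
  then show ?thesis using A C by blast
qed

definition hh where
  "hh n E Vp v j = (\<Sum>u\<in>set (Nlist n E v). if u \<in> Vp j then card (set (Nlist n E v) \<inter> set (Nlist n E u)) else 0)"

lemma step1:
  assumes vp: "valid_partition n P Vp"
  shows "algorithm_result n E P Vp =
    (\<Sum>v\<in>{0..<n}. \<Sum>u\<in>set (Nlist n E v). card (set (Nlist n E v) \<inter> set (Nlist n E u)))"
proof -
  have finVp: "\<And>i. i < P \<Longrightarrow> finite (Vp i)"
  proof -
    fix i assume "i < P"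
    then have "Vp i \<subseteq> {0..<n}" using vp unfolding valid_partition_def by blast
    then show "finite (Vp i)" using finite_subset by blast
  qed
  have loc: "local_count n E Vp j = (\<Sum>v\<in>Vp j. hh n E Vp v j)" for j
    unfolding local_count_def hh_def sum_Nlist ..
  have rec: "receive_value n E Vp j (Nlist n E v) = hh n E Vp v j" for j v
    unfolding receive_value_def hh_def sum_Nlist by (rule sum.cong[OF refl]) (simp add: Int_commute)
  have snt: "(\<Sum>v\<in>sent n E Vp i j. hh n E Vp v j) = (\<Sum>v\<in>Vp i. hh n E Vp v j)" if "i < P" for i j
    apply (rule sum.mono_neutral_left)
    using finVp[OF that] by (auto simp: sent_def hh_def)
  have pc: "proc_count n E P Vp j = (\<Sum>i<P. \<Sum>v\<in>Vp i. hh n E Vp v j)" if "j < P" for j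
  proof -
    have "proc_count n E P Vp j = (\<Sum>v\<in>Vp j. hh n E Vp v j) + (\<Sum>i\<in>{0..<P} - {j}. \<Sum>v\<in>Vp i. hh n E Vp v j)"
      unfolding proc_count_def loc rec using snt by simp
    also have "\<dots> = (\<Sum>i\<in>{0..<P}. \<Sum>v\<in>Vp i. hh n E Vp v j)"
      using that by (simp add: sum.remove[of "{0..<P}" j])
    finally show ?thesis by (simp add: lessThan_atLeast0)
  qed
  have "algorithm_result n E P Vp = (\<Sum>j<P. \<Sum>i<P. \<Sum>v\<in>Vp i. hh n E Vp v j)"
    unfolding algorithm_result_def using pc by simp
  also have "\<dots> = (\<Sum>i<P. \<Sum>j<P. \<Sum>v\<in>Vp i. hh n E Vp v j)" by (rule sum.swap)
  also have "\<dots> = (\<Sum>i<P. \<Sum>v\<in>Vp i. \<Sum>j<P. hh n E Vp v j)"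
    by (simp add: sum.swap[of _ _ "Vp _"])
  also have "\<dots> = (\<Sum>v\<in>{0..<n}. \<Sum>j<P. hh n E Vp v j)" by (rule part_sum[OF vp])
  also have "\<dots> = (\<Sum>v\<in>{0..<n}. \<Sum>u\<in>set (Nlist n E v). card (set (Nlist n E v) \<inter> set (Nlist n E u)))"
  proof (rule sum.cong[OF refl])
    fix v
    have "(\<Sum>j<P. hh n E Vp v j) = (\<Sum>u\<in>set (Nlist n E v). \<Sum>j<P. if u \<in> Vp j then card (set (Nlist n E v) \<inter> set (Nlist n E u)) else 0)"
      unfolding hh_def by (rule sum.swap)
    also have "\<dots> = (\<Sum>u\<in>set (Nlist n E v). card (set (Nlist n E v) \<inter> set (Nlist n E u)))"
      apply (rule sum.cong[OF refl])
      apply (rule ind_sum[OF vp])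
      by (simp add: set_Nlist)
    finally show "(\<Sum>j<P. hh n E Vp v j) = (\<Sum>u\<in>set (Nlist n E v). card (set (Nlist n E v) \<inter> set (Nlist n E u)))" .
  qed
  finally show ?thesis .
qed

lemma step2:
  assumes g: "simple_graph n E"
  shows "(\<Sum>v\<in>{0..<n}. \<Sum>u\<in>set (Nlist n E v). card (set (Nlist n E v) \<inter> set (Nlist n E u)))
     = card (triangles E)"
proof -
  define S where "S v = set (Nlist n E v)" for v
  define T3 where "T3 = Sigma {0..<n} (\<lambda>v. Sigma (S v) (\<lambda>u. S v \<inter> S u))"
  have finS: "finite (S v)" for v unfolding S_def by simp
  have "card T3 = (\<Sum>v\<in>{0..<n}. card (Sigma (S v) (\<lambda>u. S v \<inter> S u)))"
    unfolding T3_def by (rule card_SigmaI) (auto simp: finS)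
  also have "\<dots> = (\<Sum>v\<in>{0..<n}. \<Sum>u\<in>S v. card (S v \<inter> S u))"
    by (rule sum.cong[OF refl], rule card_SigmaI) (auto simp: finS)
  finally have c1: "card T3 = (\<Sum>v\<in>{0..<n}. \<Sum>u\<in>S v. card (S v \<inter> S u))" .
  have SE: "x \<in> S v \<longleftrightarrow> x < n \<and> (x, v) \<in> E \<and> prec n E v x" for x v
    unfolding S_def set_Nlist by simp
  have symE: "(a, b) \<in> E \<Longrightarrow> (b, a) \<in> E" for a b
    using g unfolding simple_graph_def sym_def by blast
  have irr: "(a, a) \<notin> E" for a using g unfolding simple_graph_def by blast
  have inE: "(a, b) \<in> E \<Longrightarrow> a < n \<and> b < n" for a b
    using g unfolding simple_graph_def by auto
  define gg where "gg = (\<lambda>(v::nat, u::nat, w::nat). {v, u, w})"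
  have T3E: "x \<in> T3 \<longleftrightarrow> (\<exists>v u w. x = (v,u,w) \<and> v < n \<and> u < n \<and> w < n \<and> (u,v) \<in> E \<and> (w,v) \<in> E \<and> (w,u) \<in> E
      \<and> prec n E v u \<and> prec n E u w)" for x
    unfolding T3_def by (auto simp: SE intro: prec_trans)
  have inj: "inj_on gg T3"
  proof (rule inj_onI)
    fix x y assume x: "x \<in> T3" and y: "y \<in> T3" and e: "gg x = gg y"
    from x obtain v u w where xx: "x = (v,u,w)" "prec n E v u" "prec n E u w" using T3E by blast
    from y obtain v' u' w' where yy: "y = (v',u',w')" "prec n E v' u'" "prec n E u' w'" using T3E by blast
    from e have s: "{v,u,w} = {v',u',w'}" unfolding gg_def xx yy by simp
    have "v = v' \<and> u = u' \<and> w = w'"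
      by (rule chain3[of "prec n E"]) (use xx yy s prec_irrefl prec_trans in auto)
    then show "x = y" using xx yy by simp
  qed
  have img1: "gg ` T3 \<subseteq> triangles E"
  proof
    fix t assume "t \<in> gg ` T3"
    then obtain x where x: "x \<in> T3" "t = gg x" by blast
    then obtain v u w where "t = {v,u,w}" "(u,v) \<in> E" "(w,v) \<in> E" "(w,u) \<in> E"
      unfolding T3E gg_def by auto
    then show "t \<in> triangles E" unfolding triangles_def using symE by blast
  qed
  have img2: "triangles E \<subseteq> gg ` T3"
  proof
    fix t assume "t \<in> triangles E"
    then obtain a b c where t: "t = {a,b,c}" and e: "(a,b) \<in> E" "(b,c) \<in> E" "(c,a) \<in> E"
      unfolding triangles_def by blast
    have dab: "a \<noteq> b" "b \<noteq> c" "c \<noteq> a" using e irr by auto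
    have adj: "\<And>p q. p \<in> {a,b,c} \<Longrightarrow> q \<in> {a,b,c} \<Longrightarrow> p \<noteq> q \<Longrightarrow> (p,q) \<in> E"
      using e symE by blast
    have bd: "\<And>p. p \<in> {a,b,c} \<Longrightarrow> p < n" using e inE by blast
    have H: "t \<in> gg ` T3" if h: "v \<in> {a,b,c}" "u \<in> {a,b,c}" "w \<in> {a,b,c}"
      "prec n E v u" "prec n E u w" "{v,u,w} = {a,b,c}" for v u w
    proof -
      have vw: "prec n E v w" using h prec_trans by blast
      have ne: "v \<noteq> u" "u \<noteq> w" "v \<noteq> w" using h(4,5) vw prec_irrefl by metis+
      have "(v,u,w) \<in> T3" unfolding T3E using h vw ne adj bd by blast
      moreover have "gg (v,u,w) = t" unfolding gg_def using h t by simp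
      ultimately show ?thesis by (metis image_eqI)
    qed
    have pab: "prec n E a b \<or> prec n E b a" using dab prec_total by blast
    have pbc: "prec n E b c \<or> prec n E c b" using dab prec_total by blast
    have pac: "prec n E a c \<or> prec n E c a" using dab prec_total by blast
    show "t \<in> gg ` T3"
      using pab pbc pac
    proof (elim disjE)
      assume "prec n E a b" "prec n E b c" then show ?thesis using H[of a b c] by auto
    next
      assume "prec n E a b" "prec n E c b" "prec n E a c" then show ?thesis using H[of a c b] by (auto simp: insert_commute)
    next
      assume "prec n E a b" "prec n E c b" "prec n E c a" then show ?thesis using H[of c a b] by (auto simp: insert_commute)
    next
      assume "prec n E b a" "prec n E b c" "prec n E a c" then show ?thesis using H[of b a c] by (auto simp: insert_commute)
    next
      assume "prec n E b a" "prec n E b c" "prec n E c a" then show ?thesis using H[of b c a] by (auto simp: insert_commute)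
    next
      assume "prec n E b a" "prec n E c b" then show ?thesis using H[of c b a] by (auto simp: insert_commute)
    qed (use prec_trans prec_asym H[of c b a] in \<open>blast | auto simp: insert_commute\<close>)+
  qed
  have img: "gg ` T3 = triangles E" using img1 img2 by blast
  have "card (triangles E) = card T3" using card_image[OF inj] img by simp
  then show ?thesis using c1 unfolding S_def by simp
qed

theorem theorem1:
  fixes n P :: nat and E :: "(nat \<times> nat) set" and Vp :: "nat \<Rightarrow> nat set"
  assumes "simple_graph n E"
    and "P \<ge> 1"
    and "valid_partition n P Vp"
  shows "algorithm_result n E P Vp = card (triangles E)"
  using step1[OF assms(3)] step2[OF assms(1)] by simp

end
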